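(* Let $S$ be a memory system satisfying the Causality and Data Independence assumptions, let $n,m\ge1$, let $\Omega$ be the simple witness for $S(n,m)$, and let $1\le k\le\min\{n,m\}$. Then there is an unambiguous trace $\tau$ of $S(n,m)$ such that $G(\Omega)(\tau)$ has a canonical $k$-nice cycle if and only if there is a trace $\tau'$ of $S(n,m,2)$ such that $\tau'\in Constrain_k(j)$ for all $1\le j\le m$ and $\tau'\in Check_k(i)$ for all $1\le i\le k$.
   Context: Notation: $\mathbb{N}_n=\{1,\dots,n\}$, $\mathbb{W}_n=\{0,\dots,n\}$, $\mathbb{W}=\{0,1,2,\dots\}$. Memory events $E(n,m,v)=\{R,W\}\times\mathbb{N}_n\times\mathbb{N}_m\times\mathbb{W}_v$; for $e=\langle a,b,c,d\rangle$, $op(e)=a$, $proc(e)=b$, $loc(e)=c$, $data(e)=d$; $0$ models the initial value of every location. A memory system is a family $S=(S(n,m,v))_{n,m,v\ge1}$, $S(n,m,v)$ a regular set of finite runs over an alphabet $E^a(n,m,v)\supseteq E(n,m,v)$ (other letters are internal events); $S(n,m)=\bigcup_{v\ge1}S(n,m,v)$. The trace of a run is its subsequence of memory events; traces of $S(n,m,v)$ (resp. $S(n,m)$) are traces of its runs. For a sequence $\tau$ of memory events with positions $1,\dots,|\tau|$: $P(\tau,i)=\{k: proc(\tau(k))=i\}$, $L(\tau,j)=\{k: loc(\tau(k))=j\}$, $L^w(\tau,j)$, $L^r(\tau,j)$ the write/read positions in $L(\tau,j)$, $M(\tau,i)=\{\langle u,v\rangle: u,v\in P(\tau,i), u<v\}$.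 $\tau$ is unambiguous if for every $j$ and $x\in L^w(\tau,j)$, $data(\tau(x))\ne0$ and $data(\tau(x))\ne data(\tau(y))$ for all $y\in L^w(\tau,j)\setminus\{x\}$. Causality: for all $n,m,v$, every trace $\tau$ of $S(n,m,v)$, every $j$ and $x\in L^r(\tau,j)$, either $data(\tau(x))=0$ or some $y\in L^w(\tau,j)$ has $data(\tau(y))=data(\tau(x))$. Data Independence: with renaming functions $\lambda:\mathbb{N}_m\times\mathbb{W}\to\mathbb{W}$, $\lambda(j,0)=0$, and $\lambda^d(\langle a,b,c,d\rangle)=\langle a,b,c,\lambda(c,d)\rangle$ letterwise, for all $n,m,v$ and $\tau\in E(n,m,v)^*$: $\tau$ is a trace of $S(n,m,v)$ iff $\tau=\lambda^d(\tau')$ for some unambiguous trace $\tau'$ of $S(n,m)$ and renaming function $\lambda$ with values in $\mathbb{W}_v$. The simple witness $\Omega$ assigns to each trace $\tau$ and location $j$ the order $\Omega(\tau,j)=\{\langle x,y\rangle: x,y\in L^w(\tau,j), x<y\}$. For unambiguous $\tau$: $\langle x,y\rangle\in\Omega^e(\tau,j)$ (for $x,y\in L(\tau,j)$) iff (1) $data(\tau(x))=data(\tau(y))$, $op(\tau(x))=W$, $op(\tau(y))=R$; or (2) $data(\tau(x))=0\ne data(\tau(y))$; or (3) some $a,b\in L^w(\tau,j)$ have $\langle a,b\rangle\in\Omega(\tau,j)$, $data(\tau(a))=data(\tau(x))$, $data(\tau(b))=data(\tau(y))$. $G(\Omega)(\tau)$ is the directed graph on $\{1,\dots,|\tau|\}$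 with edges $\bigcup_iM(\tau,i)\cup\bigcup_j\Omega^e(\tau,j)$. With $x\oplus1=x+1$ for $x<k$ and $k\oplus1=1$, a canonical $k$-nice cycle in $G(\Omega)(\tau)$ is a sequence $u_1,v_1,\dots,u_k,v_k$ of pairwise distinct vertices with $\langle u_x,v_x\rangle\in M(\tau,x)$ and $\langle v_x,u_{x\oplus1}\rangle\in\Omega^e(\tau,x\oplus1)$ for all $1\le x\le k$. Languages over $E(n,m,2)$: for $1\le j\le k$, $Constrain_k(j)$ is the set of sequences whose subsequence of write events to location $j$ (events $e$ with $op(e)=W$, $loc(e)=j$) has data-value sequence in $0^*\cup 0^*1\,2^*$ (i.e. it is accepted by the automaton with states $a$ (initial) and $b$, both accepting, that ignores all other events, loops on $a$ for data $0$, goes $a\to b$ on data $1$, loops on $b$ for data $2$, and has no other transitions). For $k<j\le m$, $Constrain_k(j)$ is the set of sequences in which every write event to location $j$ has data value $0$. For $1\le i\le k$, $Check_k(i)$ is the set of sequences $\tau$ over $E(n,m,2)$ having positions $x<y$ such that $proc(\tau(x))=i$, $loc(\tau(x))=i$, $data(\tau(x))\in\{1,2\}$, and $proc(\tau(y))=i$, $loc(\tau(y))=i\oplus1$, and either $data(\tau(y))=0$ or ($op(\tau(y))=W$ and $data(\tau(y))=1$). *)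

theory Defs
  imports Main
begin

datatype opk = R | W

datatype event = Ev (op: opk) (proc: nat) (loc: nat) (data: nat)

definition E :: "nat \<Rightarrow> nat \<Rightarrow> nat \<Rightarrow> event set" where
  "E n m v = {e. proc e \<in> {1..n} \<and> loc e \<in> {1..m} \<and> data e \<le> v}"

datatype 'i letter = Mem event | Internal 'i

fun trace :: "'i letter list \<Rightarrow> event list" where
  "trace [] = []"
| "trace (Mem e # w) = e # trace w"
| "trace (Internal _ # w) = trace w"

fun reach :: "(nat \<times> 'a \<times> nat) set \<Rightarrow> nat \<Rightarrow> 'a list \<Rightarrow> nat set" where
  "reach \<delta> q [] = {q}"
| "reach \<delta> q (a # w) = \<Union>{reach \<delta> q' w | q'. (q, a, q') \<in> \<delta>}"

definition regular_over :: "'a set \<Rightarrow> 'a list set \<Rightarrow> bool" where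
  "regular_over A L \<longleftrightarrow> finite A \<and> L \<subseteq> lists A \<and>
     (\<exists>(Q::nat set) q0 \<delta> F. finite Q \<and> q0 \<in> Q \<and> F \<subseteq> Q \<and>
        (\<forall>(p, a, q) \<in> \<delta>. p \<in> Q \<and> a \<in> A \<and> q \<in> Q) \<and>
        L = {w. w \<in> lists A \<and> reach \<delta> q0 w \<inter> F \<noteq> {}})"

type_synonym 'i memsys = "nat \<Rightarrow> nat \<Rightarrow> nat \<Rightarrow> 'i letter list set"

definition memory_system :: "'i memsys \<Rightarrow> bool" where
  "memory_system S \<longleftrightarrow> (\<forall>n m v. n \<ge> 1 \<longrightarrow> m \<ge> 1 \<longrightarrow> v \<ge> 1 \<longrightarrow>
     (\<exists>Ai. regular_over (Mem ` E n m v \<union> Internal ` Ai) (S n m v)))"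

definition traces_v :: "'i memsys \<Rightarrow> nat \<Rightarrow> nat \<Rightarrow> nat \<Rightarrow> event list set" where
  "traces_v S n m v = trace ` S n m v"

definition traces :: "'i memsys \<Rightarrow> nat \<Rightarrow> nat \<Rightarrow> event list set" where
  "traces S n m = (\<Union>v\<in>{1..}. traces_v S n m v)"

section \<open>Positions (0-based indices into the list)\<close>

definition Pos :: "event list \<Rightarrow> nat set" where "Pos \<tau> = {..<length \<tau>}"
definition P :: "event list \<Rightarrow> nat \<Rightarrow> nat set" where
  "P \<tau> i = {k \<in> Pos \<tau>. proc (\<tau> ! k) = i}"
definition L :: "event list \<Rightarrow> nat \<Rightarrow> nat set" where
  "L \<tau> j = {k \<in> Pos \<tau>. loc (\<tau> ! k) = j}"
definition Lw :: "event list \<Rightarrow> nat \<Rightarrow> nat set" where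
  "Lw \<tau> j = {k \<in> L \<tau> j. op (\<tau> ! k) = W}"
definition Lr :: "event list \<Rightarrow> nat \<Rightarrow> nat set" where
  "Lr \<tau> j = {k \<in> L \<tau> j. op (\<tau> ! k) = R}"
definition M :: "event list \<Rightarrow> nat \<Rightarrow> (nat \<times> nat) set" where
  "M \<tau> i = {(u, v). u \<in> P \<tau> i \<and> v \<in> P \<tau> i \<and> u < v}"

definition unambiguous :: "event list \<Rightarrow> bool" where
  "unambiguous \<tau> \<longleftrightarrow> (\<forall>j. \<forall>x \<in> Lw \<tau> j. data (\<tau> ! x) \<noteq> 0 \<and>
      (\<forall>y \<in> Lw \<tau> j - {x}. data (\<tau> ! x) \<noteq> data (\<tau> ! y)))"

definition causality :: "'i memsys \<Rightarrow> bool" where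
  "causality S \<longleftrightarrow> (\<forall>n m v. n \<ge> 1 \<longrightarrow> m \<ge> 1 \<longrightarrow> v \<ge> 1 \<longrightarrow>
     (\<forall>\<tau> \<in> traces_v S n m v. \<forall>j. \<forall>x \<in> Lr \<tau> j.
        data (\<tau> ! x) = 0 \<or> (\<exists>y \<in> Lw \<tau> j. data (\<tau> ! y) = data (\<tau> ! x))))"

definition renaming :: "nat \<Rightarrow> nat \<Rightarrow> (nat \<Rightarrow> nat \<Rightarrow> nat) \<Rightarrow> bool" where
  "renaming m v lam \<longleftrightarrow> (\<forall>j \<in> {1..m}. lam j 0 = 0 \<and> (\<forall>d. lam j d \<le> v))"

definition rename_data :: "(nat \<Rightarrow> nat \<Rightarrow> nat) \<Rightarrow> event list \<Rightarrow> event list" where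
  "rename_data lam \<tau> = map (\<lambda>e. Ev (op e) (proc e) (loc e) (lam (loc e) (data e))) \<tau>"

definition data_independence :: "'i memsys \<Rightarrow> bool" where
  "data_independence S \<longleftrightarrow> (\<forall>n m v. n \<ge> 1 \<longrightarrow> m \<ge> 1 \<longrightarrow> v \<ge> 1 \<longrightarrow>
     (\<forall>\<tau> \<in> lists (E n m v).
        \<tau> \<in> traces_v S n m v \<longleftrightarrow>
        (\<exists>\<tau>' lam. \<tau>' \<in> traces S n m \<and> unambiguous \<tau>' \<and> renaming m v lam \<and>
                 \<tau> = rename_data lam \<tau>')))"

definition Omega :: "event list \<Rightarrow> nat \<Rightarrow> (nat \<times> nat) set" where
  "Omega \<tau> j = {(x, y). x \<in> Lw \<tau> j \<and> y \<in> Lw \<tau> j \<and> x < y}"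

definition Omega_e :: "event list \<Rightarrow> nat \<Rightarrow> (nat \<times> nat) set" where
  "Omega_e \<tau> j = {(x, y). x \<in> L \<tau> j \<and> y \<in> L \<tau> j \<and>
     ((data (\<tau> ! x) = data (\<tau> ! y) \<and> op (\<tau> ! x) = W \<and> op (\<tau> ! y) = R)
      \<or> (data (\<tau> ! x) = 0 \<and> data (\<tau> ! y) \<noteq> 0)
      \<or> (\<exists>a b. a \<in> Lw \<tau> j \<and> b \<in> Lw \<tau> j \<and> (a, b) \<in> Omega \<tau> j \<and>
              data (\<tau> ! a) = data (\<tau> ! x) \<and> data (\<tau> ! b) = data (\<tau> ! y)))}"

definition G_edges :: "event list \<Rightarrow> (nat \<times> nat) set" where
  "G_edges \<tau> = (\<Union>i. M \<tau> i) \<union> (\<Union>j. Omega_e \<tau> j)"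

definition oplus :: "nat \<Rightarrow> nat \<Rightarrow> nat" where
  "oplus k x = (if x < k then x + 1 else 1)"

definition canonical_nice_cycle :: "nat \<Rightarrow> event list \<Rightarrow> (nat \<Rightarrow> nat) \<Rightarrow> (nat \<Rightarrow> nat) \<Rightarrow> bool" where
  "canonical_nice_cycle k \<tau> u v \<longleftrightarrow>
     inj_on u {1..k} \<and> inj_on v {1..k} \<and> u ` {1..k} \<inter> v ` {1..k} = {} \<and>
     (\<forall>x \<in> {1..k}. (u x, v x) \<in> M \<tau> x \<and> (v x, u (oplus k x)) \<in> Omega_e \<tau> (oplus k x))"

definition has_canonical_nice_cycle :: "nat \<Rightarrow> event list \<Rightarrow> bool" where
  "has_canonical_nice_cycle k \<tau> \<longleftrightarrow> (\<exists>u v. canonical_nice_cycle k \<tau> u v)"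

definition write_data :: "nat \<Rightarrow> event list \<Rightarrow> nat list" where
  "write_data j \<tau> = map data (filter (\<lambda>e. op e = W \<and> loc e = j) \<tau>)"

definition Constrain :: "nat \<Rightarrow> nat \<Rightarrow> nat \<Rightarrow> nat \<Rightarrow> event list set" where
  "Constrain n m k j = {\<tau>. \<tau> \<in> lists (E n m 2) \<and>
     (if 1 \<le> j \<and> j \<le> k then
        (\<exists>a. write_data j \<tau> = replicate a 0) \<or>
        (\<exists>a c. write_data j \<tau> = replicate a 0 @ [1] @ replicate c 2)
      else (\<forall>e \<in> set \<tau>. op e = W \<and> loc e = j \<longrightarrow> data e = 0))}"

definition Check :: "nat \<Rightarrow> nat \<Rightarrow> nat \<Rightarrow> nat \<Rightarrow> event list set" where
  "Check n m k i = {\<tau>. \<tau> \<in> lists (E n m 2) \<and>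
     (\<exists>x y. x < y \<and> y < length \<tau> \<and>
        proc (\<tau> ! x) = i \<and> loc (\<tau> ! x) = i \<and> data (\<tau> ! x) \<in> {1, 2} \<and>
        proc (\<tau> ! y) = i \<and> loc (\<tau> ! y) = oplus k i \<and>
        (data (\<tau> ! y) = 0 \<or> (op (\<tau> ! y) = W \<and> data (\<tau> ! y) = 1)))}"

end

theory Submission
  imports Defs
begin


lemma trace_lists: "r \<in> lists (Mem ` A \<union> Internal ` B) \<Longrightarrow> trace r \<in> lists A"
  by (induction r rule: trace.induct) auto

lemma traces_v_E:
  assumes "memory_system S" "n \<ge> 1" "m \<ge> 1" "v \<ge> 1" "\<tau> \<in> traces_v S n m v"
  shows "\<tau> \<in> lists (E n m v)"
proof -
  obtain Ai where "regular_over (Mem ` E n m v \<union> Internal ` Ai) (S n m v)"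
    using assms unfolding memory_system_def by blast
  then have "S n m v \<subseteq> lists (Mem ` E n m v \<union> Internal ` Ai)" unfolding regular_over_def by blast
  then show ?thesis using assms(5) trace_lists unfolding traces_v_def by blast
qed

lemma sorted_wrt_filter_nth:
  "sorted_wrt Rel (filter Q xs) \<Longrightarrow> i < j \<Longrightarrow> j < length xs \<Longrightarrow> Q (xs ! i) \<Longrightarrow> Q (xs ! j)
   \<Longrightarrow> Rel (xs ! i) (xs ! j)"
proof (induction xs arbitrary: i j)
  case Nil then show ?case by simp
next
  case (Cons a xs)
  show ?case
  proof (cases i)
    case 0
    then obtain j' where j: "j = Suc j'" using Cons by (cases j) auto
    have "xs ! j' \<in> set (filter Q xs)" using Cons j by auto
    then show ?thesis using Cons 0 j by auto
  next
    case (Suc i')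
    then obtain j' where j: "j = Suc j'" using Cons by (cases j) auto
    have "sorted_wrt Rel (filter Q xs)" using Cons.prems(1) by (cases "Q a") auto
    then show ?thesis using Cons Suc j by auto
  qed
qed

definition R' :: "nat \<Rightarrow> nat \<Rightarrow> bool" where "R' x y \<longleftrightarrow> x \<le> y \<and> \<not> (x = 1 \<and> y = 1)"

lemma sorted_R'1: "sorted_wrt R' (replicate a 0)"
  by (induction a) (auto simp: R'_def)
lemma sorted_R'2: "sorted_wrt R' (replicate a 0 @ [1] @ replicate c 2)"
  by (auto simp: sorted_wrt_append R'_def sorted_R'1) (induction c, auto simp: R'_def)


lemma dir2:
  fixes S :: "'i memsys"
  assumes ms: "memory_system S" and caus: "causality S" and di: "data_independence S"
    and n: "n \<ge> 1" and m: "m \<ge> 1" and k1: "1 \<le> k" and km: "k \<le> min n m"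
    and tr': "\<tau>' \<in> traces_v S n m 2" and con: "\<forall>j \<in> {1..m}. \<tau>' \<in> Constrain n m k j"
    and chk: "\<forall>i \<in> {1..k}. \<tau>' \<in> Check n m k i"
  shows "\<exists>\<tau>. \<tau> \<in> traces S n m \<and> unambiguous \<tau> \<and> has_canonical_nice_cycle k \<tau>"
proof -
  have l': "\<tau>' \<in> lists (E n m 2)" using traces_v_E[OF ms n m _ tr'] by simp
  obtain \<tau> lam where tt: "\<tau> \<in> traces S n m" and un: "unambiguous \<tau>" and ren: "renaming m 2 lam"
    and eq: "\<tau>' = rename_data lam \<tau>"
    using di n m l' tr' unfolding data_independence_def by (meson one_le_numeral)
  obtain v0 where v0: "v0 \<ge> 1" "\<tau> \<in> traces_v S n m v0" using tt unfolding traces_def by auto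
  have causT: "\<And>j x. x \<in> Lr \<tau> j \<Longrightarrow> data (\<tau> ! x) = 0 \<or> (\<exists>y \<in> Lw \<tau> j. data (\<tau> ! y) = data (\<tau> ! x))"
    using caus v0 n m unfolding causality_def by blast
  have len: "length \<tau>' = length \<tau>" using eq by (simp add: rename_data_def)
  have nth: "\<And>p. p < length \<tau> \<Longrightarrow> op (\<tau>' ! p) = op (\<tau> ! p) \<and> proc (\<tau>' ! p) = proc (\<tau> ! p)
      \<and> loc (\<tau>' ! p) = loc (\<tau> ! p) \<and> data (\<tau>' ! p) = lam (loc (\<tau> ! p)) (data (\<tau> ! p))"
    using eq by (simp add: rename_data_def)
  have lam0: "\<And>j. j \<in> {1..k} \<Longrightarrow> lam j 0 = 0" using ren km unfolding renaming_def by auto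
  have ord: "R' (data (\<tau>' ! p)) (data (\<tau>' ! q))"
    if j: "j \<in> {1..k}" and p: "p \<in> Lw \<tau> j" and q: "q \<in> Lw \<tau> j" and pq: "p < q" for j p q
  proof -
    have "j \<in> {1..m}" using j km by auto
    then have c: "\<tau>' \<in> Constrain n m k j" using con by blast
    have "sorted_wrt R' (write_data j \<tau>')"
      using c j sorted_R'1 sorted_R'2 unfolding Constrain_def by (auto split: if_splits)
    then have s: "sorted_wrt (\<lambda>x y. R' (data x) (data y)) (filter (\<lambda>e. op e = W \<and> loc e = j) \<tau>')"
      unfolding write_data_def by (simp add: sorted_wrt_map)
    show ?thesis
      apply (rule sorted_wrt_filter_nth[OF s pq])
      using p q nth len unfolding Lw_def L_def Pos_def by auto
  qed
  have getw: "\<exists>w \<in> Lw \<tau> j. data (\<tau> ! w) = data (\<tau> ! p)" if "p \<in> L \<tau> j" "data (\<tau> ! p) \<noteq> 0" for j p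
  proof (cases "op (\<tau> ! p)")
    case R
    then have "p \<in> Lr \<tau> j" using that unfolding Lr_def by auto
    then show ?thesis using causT[of p j] that(2) by blast
  next
    case W
    then have "p \<in> Lw \<tau> j" using that unfolding Lw_def by auto
    then show ?thesis by blast
  qed
  have "\<forall>i \<in> {1..k}. \<exists>xy. fst xy < snd xy \<and> snd xy < length \<tau>' \<and>
        proc (\<tau>' ! fst xy) = i \<and> loc (\<tau>' ! fst xy) = i \<and> data (\<tau>' ! fst xy) \<in> {1, 2} \<and>
        proc (\<tau>' ! snd xy) = i \<and> loc (\<tau>' ! snd xy) = oplus k i \<and>
        (data (\<tau>' ! snd xy) = 0 \<or> (op (\<tau>' ! snd xy) = W \<and> data (\<tau>' ! snd xy) = 1))"
    using chk unfolding Check_def by force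
  then obtain f where f: "\<forall>i \<in> {1..k}. fst (f i) < snd (f i) \<and> snd (f i) < length \<tau>' \<and>
        proc (\<tau>' ! fst (f i)) = i \<and> loc (\<tau>' ! fst (f i)) = i \<and> data (\<tau>' ! fst (f i)) \<in> {1, 2} \<and>
        proc (\<tau>' ! snd (f i)) = i \<and> loc (\<tau>' ! snd (f i)) = oplus k i \<and>
        (data (\<tau>' ! snd (f i)) = 0 \<or> (op (\<tau>' ! snd (f i)) = W \<and> data (\<tau>' ! snd (f i)) = 1))"
    by (rule bchoice[THEN exE]) blast
  define u where "u i = fst (f i)" for i
  define v where "v i = snd (f i)" for i
  have uv: "u i < v i" "v i < length \<tau>" "proc (\<tau> ! u i) = i" "loc (\<tau> ! u i) = i"
     "data (\<tau>' ! u i) \<in> {1, 2}" "proc (\<tau> ! v i) = i" "loc (\<tau> ! v i) = oplus k i"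
     "data (\<tau>' ! v i) = 0 \<or> (op (\<tau> ! v i) = W \<and> data (\<tau>' ! v i) = 1)"
     "data (\<tau>' ! u i) = lam i (data (\<tau> ! u i))"
     "data (\<tau>' ! v i) = lam (oplus k i) (data (\<tau> ! v i))"
    if "i \<in> {1..k}" for i
  proof -
    have fi: "u i < v i" "v i < length \<tau>" "proc (\<tau>' ! u i) = i" "loc (\<tau>' ! u i) = i"
     "data (\<tau>' ! u i) \<in> {1, 2}" "proc (\<tau>' ! v i) = i" "loc (\<tau>' ! v i) = oplus k i"
     "data (\<tau>' ! v i) = 0 \<or> (op (\<tau>' ! v i) = W \<and> data (\<tau>' ! v i) = 1)"
      using f that len unfolding u_def v_def by auto
    have "u i < length \<tau>" using fi by simp
    note a = nth[OF this] nth[OF fi(2)]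
    show "u i < v i" "v i < length \<tau>" "proc (\<tau> ! u i) = i" "loc (\<tau> ! u i) = i"
     "data (\<tau>' ! u i) \<in> {1, 2}" "proc (\<tau> ! v i) = i" "loc (\<tau> ! v i) = oplus k i"
     "data (\<tau>' ! v i) = 0 \<or> (op (\<tau> ! v i) = W \<and> data (\<tau>' ! v i) = 1)"
     "data (\<tau>' ! u i) = lam i (data (\<tau> ! u i))"
     "data (\<tau>' ! v i) = lam (oplus k i) (data (\<tau> ! v i))"
      using fi a by auto
  qed
  have opl: "oplus k x \<in> {1..k}" if "x \<in> {1..k}" for x using that unfolding oplus_def by auto
  have cyc: "canonical_nice_cycle k \<tau> u v"
    unfolding canonical_nice_cycle_def
  proof (intro conjI ballI)
    show "inj_on u {1..k}" by (rule inj_onI) (metis uv(3))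
    show "inj_on v {1..k}" by (rule inj_onI) (metis uv(6))
    show "u ` {1..k} \<inter> v ` {1..k} = {}"
      using uv(1,3,6) by auto (metis less_irrefl)
  next
    fix x assume x: "x \<in> {1..k}"
    show "(u x, v x) \<in> M \<tau> x" using uv[OF x] unfolding M_def P_def Pos_def by auto
    define j where "j = oplus k x"
    have j: "j \<in> {1..k}" using opl x j_def by auto
    define a where "a = v x"
    define b where "b = u j"
    have aL: "a \<in> L \<tau> j" and bL: "b \<in> L \<tau> j" using uv[OF x] uv[OF j] unfolding a_def b_def j_def L_def Pos_def by auto
    have ab: "a \<noteq> b"
    proof
      assume "a = b"
      then have "x = j" using uv(6)[OF x] uv(3)[OF j] a_def b_def by metis
      then show False using uv(1)[OF x] \<open>a = b\<close> a_def b_def by simp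
    qed
    have db': "data (\<tau>' ! b) \<in> {1,2}" "data (\<tau>' ! b) = lam j (data (\<tau> ! b))" using uv[OF j] b_def by auto
    have da': "data (\<tau>' ! a) = 0 \<or> (op (\<tau> ! a) = W \<and> data (\<tau>' ! a) = 1)" "data (\<tau>' ! a) = lam j (data (\<tau> ! a))"
      using uv[OF x] a_def j_def by auto
    have db0: "data (\<tau> ! b) \<noteq> 0" using db' lam0[OF j] by (metis empty_iff insert_iff numeral_eq_one_iff one_neq_zero semiring_norm(85) zero_neq_numeral)
    obtain wb where wb: "wb \<in> Lw \<tau> j" "data (\<tau> ! wb) = data (\<tau> ! b)" using getw[OF bL db0] by blast
    have wb': "data (\<tau>' ! wb) = data (\<tau>' ! b)"
      using wb nth[of wb] db' unfolding Lw_def L_def Pos_def by auto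
    have "(a, b) \<in> Omega_e \<tau> j"
    proof (cases "data (\<tau> ! a) = 0")
      case True
      then show ?thesis using aL bL db0 unfolding Omega_e_def by auto
    next
      case False
      obtain wa where wa: "wa \<in> Lw \<tau> j" "data (\<tau> ! wa) = data (\<tau> ! a)" using getw[OF aL False] by blast
      have wa': "data (\<tau>' ! wa) = data (\<tau>' ! a)"
        using wa nth[of wa] da' unfolding Lw_def L_def Pos_def by auto
      show ?thesis
      proof (cases "data (\<tau>' ! a) = 0")
        case True
        have "wa < wb"
        proof -
          have "wa \<noteq> wb" using wa' wb' True db' by auto
          moreover have "\<not> wb < wa" using ord[OF j wb(1) wa(1)] wa' wb' True db' unfolding R'_def by auto
          ultimately show ?thesis by auto
        qed
        then show ?thesis using aL bL wa wb unfolding Omega_e_def Omega_def by blast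
      next
        case False
        then have aW: "op (\<tau> ! a) = W" "data (\<tau>' ! a) = 1" using da' by auto
        have aLw: "a \<in> Lw \<tau> j" using aL aW unfolding Lw_def by auto
        show ?thesis
        proof (cases "data (\<tau>' ! b) = 1")
          case True
          have "wb = a"
            using ord[OF j wb(1) aLw] ord[OF j aLw wb(1)] wb' aW True unfolding R'_def
            by (metis linorder_neqE_nat)
          show ?thesis
          proof (cases "op (\<tau> ! b)")
            case R
            then show ?thesis using aL bL aW wb \<open>wb = a\<close> unfolding Omega_e_def by auto
          next
            case W
            then have bLw: "b \<in> Lw \<tau> j" using bL unfolding Lw_def by auto
            have "b = a"
              using ord[OF j bLw aLw] ord[OF j aLw bLw] aW True unfolding R'_def
              by (metis linorder_neqE_nat)
            then show ?thesis using ab by simp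
          qed
        next
          case False
          then have b2: "data (\<tau>' ! b) = 2" using db' by auto
          have "a < wb"
          proof -
            have "a \<noteq> wb" using wb' aW b2 by auto
            moreover have "\<not> wb < a" using ord[OF j wb(1) aLw] wb' aW b2 unfolding R'_def by auto
            ultimately show ?thesis by auto
          qed
          then show ?thesis using aL bL aLw wb unfolding Omega_e_def Omega_def by blast
        qed
      qed
    qed
    then show "(v x, u (oplus k x)) \<in> Omega_e \<tau> (oplus k x)" using a_def b_def j_def by simp
  qed
  then show ?thesis using tt un unfolding has_canonical_nice_cycle_def by blast
qed


lemma dir1:
  fixes S :: "'i memsys"
  assumes ms: "memory_system S" and caus: "causality S" and di: "data_independence S"
    and n: "n \<ge> 1" and m: "m \<ge> 1" and k1: "1 \<le> k" and km: "k \<le> min n m"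
    and tt: "\<tau> \<in> traces S n m" and un: "unambiguous \<tau>" and hc: "has_canonical_nice_cycle k \<tau>"
  shows "\<exists>\<tau>'. \<tau>' \<in> traces_v S n m 2 \<and>
            (\<forall>j \<in> {1..m}. \<tau>' \<in> Constrain n m k j) \<and>
            (\<forall>i \<in> {1..k}. \<tau>' \<in> Check n m k i)"
proof -
  obtain v0 where v0: "v0 \<ge> 1" "\<tau> \<in> traces_v S n m v0" using tt unfolding traces_def by auto
  have lE: "\<tau> \<in> lists (E n m v0)" using traces_v_E[OF ms n m v0] .
  have causT: "\<And>j x. x \<in> Lr \<tau> j \<Longrightarrow> data (\<tau> ! x) = 0 \<or> (\<exists>y \<in> Lw \<tau> j. data (\<tau> ! y) = data (\<tau> ! x))"
    using caus v0 n m unfolding causality_def by blast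
  have un0: "\<And>j x. x \<in> Lw \<tau> j \<Longrightarrow> data (\<tau> ! x) \<noteq> 0" using un unfolding unambiguous_def by blast
  have un1: "\<And>j x y. x \<in> Lw \<tau> j \<Longrightarrow> y \<in> Lw \<tau> j \<Longrightarrow> data (\<tau> ! x) = data (\<tau> ! y) \<Longrightarrow> x = y"
    using un unfolding unambiguous_def by blast
  obtain u v where cyc: "canonical_nice_cycle k \<tau> u v" using hc unfolding has_canonical_nice_cycle_def by blast
  have cM: "\<And>x. x \<in> {1..k} \<Longrightarrow> (u x, v x) \<in> M \<tau> x"
   and cO: "\<And>x. x \<in> {1..k} \<Longrightarrow> (v x, u (oplus k x)) \<in> Omega_e \<tau> (oplus k x)"
    using cyc unfolding canonical_nice_cycle_def by auto
  define pr where "pr j = (if j = 1 then k else j - 1)" for j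
  have opl: "oplus k x \<in> {1..k}" if "x \<in> {1..k}" for x using that unfolding oplus_def by auto
  have prk: "pr j \<in> {1..k}" "oplus k (pr j) = j" if "j \<in> {1..k}" for j
    using that unfolding pr_def oplus_def by auto
  have pro: "pr (oplus k x) = x" if "x \<in> {1..k}" for x
    using that unfolding pr_def oplus_def by auto
  have "\<forall>x \<in> {1..k}. \<exists>w. w \<in> Lw \<tau> (oplus k x) \<and> data (\<tau> ! w) = data (\<tau> ! u (oplus k x)) \<and>
     (data (\<tau> ! v x) = 0 \<or> v x = w \<or> (\<exists>a \<in> Lw \<tau> (oplus k x). a < w \<and> data (\<tau> ! a) = data (\<tau> ! v x)))"
  proof
    fix x assume x: "x \<in> {1..k}"
    define j where "j = oplus k x"
    have e: "(v x, u j) \<in> Omega_e \<tau> j" using cO[OF x] j_def by simp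
    have vL: "v x \<in> L \<tau> j" and uL: "u j \<in> L \<tau> j" using e unfolding Omega_e_def by auto
    have "\<exists>w. w \<in> Lw \<tau> j \<and> data (\<tau> ! w) = data (\<tau> ! u j) \<and>
     (data (\<tau> ! v x) = 0 \<or> v x = w \<or> (\<exists>a \<in> Lw \<tau> j. a < w \<and> data (\<tau> ! a) = data (\<tau> ! v x)))"
    proof -
      consider (c1) "data (\<tau> ! v x) = data (\<tau> ! u j)" "op (\<tau> ! v x) = W" "op (\<tau> ! u j) = R"
        | (c2) "data (\<tau> ! v x) = 0" "data (\<tau> ! u j) \<noteq> 0"
        | (c3) a b where "a \<in> Lw \<tau> j" "b \<in> Lw \<tau> j" "(a, b) \<in> Omega \<tau> j"
              "data (\<tau> ! a) = data (\<tau> ! v x)" "data (\<tau> ! b) = data (\<tau> ! u j)"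
        using e unfolding Omega_e_def by auto
      then show ?thesis
      proof cases
        case c1
        then have "v x \<in> Lw \<tau> j" using vL unfolding Lw_def by auto
        then show ?thesis using c1 by metis
      next
        case c2
        have "\<exists>w \<in> Lw \<tau> j. data (\<tau> ! w) = data (\<tau> ! u j)"
        proof (cases "op (\<tau> ! u j)")
          case R
          then have "u j \<in> Lr \<tau> j" using uL unfolding Lr_def by auto
          then show ?thesis using causT[of "u j" j] c2 by blast
        next
          case W
          then have "u j \<in> Lw \<tau> j" using uL unfolding Lw_def by auto
          then show ?thesis by blast
        qed
        then show ?thesis using c2 by blast
      next
        case c3
        then show ?thesis unfolding Omega_def by blast
      qed
    qed
    then show "\<exists>w. w \<in> Lw \<tau> (oplus k x) \<and> data (\<tau> ! w) = data (\<tau> ! u (oplus k x)) \<and>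
     (data (\<tau> ! v x) = 0 \<or> v x = w \<or> (\<exists>a \<in> Lw \<tau> (oplus k x). a < w \<and> data (\<tau> ! a) = data (\<tau> ! v x)))"
      using j_def by simp
  qed
  then obtain wf where wf: "\<forall>x \<in> {1..k}. wf x \<in> Lw \<tau> (oplus k x) \<and> data (\<tau> ! wf x) = data (\<tau> ! u (oplus k x)) \<and>
     (data (\<tau> ! v x) = 0 \<or> v x = wf x \<or> (\<exists>a \<in> Lw \<tau> (oplus k x). a < wf x \<and> data (\<tau> ! a) = data (\<tau> ! v x)))"
    by (rule bchoice[THEN exE]) blast
  define Wj where "Wj j = wf (pr j)" for j
  have Wj: "Wj j \<in> Lw \<tau> j" "data (\<tau> ! Wj j) = data (\<tau> ! u j)" if "j \<in> {1..k}" for j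
    using wf prk[OF that] unfolding Wj_def by metis+
  have Wv: "data (\<tau> ! v x) = 0 \<or> v x = Wj (oplus k x) \<or>
      (\<exists>a \<in> Lw \<tau> (oplus k x). a < Wj (oplus k x) \<and> data (\<tau> ! a) = data (\<tau> ! v x))"
    if "x \<in> {1..k}" for x using wf that pro[OF that] unfolding Wj_def by metis
  define lam :: "nat \<Rightarrow> nat \<Rightarrow> nat" where "lam j e = (if j \<in> {1..k} \<and> e \<noteq> 0 then
      (if e = data (\<tau> ! Wj j) then 1 else if (\<exists>p \<in> Lw \<tau> j. Wj j < p \<and> data (\<tau> ! p) = e) then 2 else 0)
      else 0)" for j e
  define \<tau>' where "\<tau>' = rename_data lam \<tau>"
  have len: "length \<tau>' = length \<tau>" using \<tau>'_def by (simp add: rename_data_def)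
  have nth: "\<And>p. p < length \<tau> \<Longrightarrow> op (\<tau>' ! p) = op (\<tau> ! p) \<and> proc (\<tau>' ! p) = proc (\<tau> ! p)
      \<and> loc (\<tau>' ! p) = loc (\<tau> ! p) \<and> data (\<tau>' ! p) = lam (loc (\<tau> ! p)) (data (\<tau> ! p))"
    using \<tau>'_def by (simp add: rename_data_def)
  have ren: "renaming m 2 lam" unfolding renaming_def lam_def by auto
  have lam2: "lam j e \<le> 2" for j e unfolding lam_def by auto
  have l': "\<tau>' \<in> lists (E n m 2)"
    using lE lam2 unfolding \<tau>'_def rename_data_def E_def by auto
  have tr': "\<tau>' \<in> traces_v S n m 2"
  proof -
    have "\<forall>\<tau>0 \<in> lists (E n m 2). \<tau>0 \<in> traces_v S n m 2 \<longleftrightarrow>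
        (\<exists>\<tau>1 lam. \<tau>1 \<in> traces S n m \<and> unambiguous \<tau>1 \<and> renaming m 2 lam \<and> \<tau>0 = rename_data lam \<tau>1)"
      using di n m unfolding data_independence_def by simp
    then show ?thesis using l' tt un ren unfolding \<tau>'_def by blast
  qed
  have con: "\<tau>' \<in> Constrain n m k j" if j: "j \<in> {1..m}" for j
  proof (cases "1 \<le> j \<and> j \<le> k")
    case False
    have "\<forall>e \<in> set \<tau>'. op e = W \<and> loc e = j \<longrightarrow> data e = 0"
      using False unfolding \<tau>'_def rename_data_def lam_def by auto
    then show ?thesis using l' False unfolding Constrain_def by auto
  next
    case True
    then have jk: "j \<in> {1..k}" by auto
    define Q where "Q e = (op e = W \<and> loc e = j)" for e
    define w where "w = Wj j"
    have wL: "w \<in> Lw \<tau> j" using Wj[OF jk] w_def by auto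
    then have wl: "w < length \<tau>" unfolding Lw_def L_def Pos_def by auto
    have wd: "map data (filter Q \<tau>') = map (\<lambda>e. lam j (data e)) (filter Q \<tau>)"
      unfolding \<tau>'_def rename_data_def Q_def by (induction \<tau>) auto
    have split: "\<tau> = take w \<tau> @ \<tau> ! w # drop (Suc w) \<tau>" using wl by (simp add: id_take_nth_drop)
    have A: "map (\<lambda>e. lam j (data e)) (filter Q (take w \<tau>)) = replicate (length (filter Q (take w \<tau>))) 0"
    proof -
      have "\<forall>y \<in> set (map (\<lambda>e. lam j (data e)) (filter Q (take w \<tau>))). y = 0"
      proof
        fix y assume "y \<in> set (map (\<lambda>e. lam j (data e)) (filter Q (take w \<tau>)))"
        then obtain e where e: "e \<in> set (take w \<tau>)" "Q e" "y = lam j (data e)" by auto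
        then obtain p where p: "p < w" "e = \<tau> ! p" using wl by (auto simp: in_set_conv_nth)
        have pL: "p \<in> Lw \<tau> j" using p e wl unfolding Lw_def L_def Pos_def Q_def by auto
        have "data e \<noteq> data (\<tau> ! w)" using un1[OF pL wL] p by auto
        moreover have "\<not> (\<exists>q \<in> Lw \<tau> j. w < q \<and> data (\<tau> ! q) = data e)"
          using un1[OF pL] p by fastforce
        ultimately show "y = 0" using e unfolding lam_def w_def by auto
      qed
      then show ?thesis by (metis length_map replicate_length_same)
    qed
    have B: "map (\<lambda>e. lam j (data e)) (filter Q (drop (Suc w) \<tau>)) = replicate (length (filter Q (drop (Suc w) \<tau>))) 2"
    proof -
      have "\<forall>y \<in> set (map (\<lambda>e. lam j (data e)) (filter Q (drop (Suc w) \<tau>))). y = 2"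
      proof
        fix y assume "y \<in> set (map (\<lambda>e. lam j (data e)) (filter Q (drop (Suc w) \<tau>)))"
        then obtain e where e: "e \<in> set (drop (Suc w) \<tau>)" "Q e" "y = lam j (data e)" by auto
        then obtain i where i: "Suc w + i < length \<tau>" "e = \<tau> ! (Suc w + i)"
          by (auto simp: in_set_conv_nth) (metis add_Suc less_diff_conv add.commute)
        define p where "p = Suc w + i"
        have pL: "p \<in> Lw \<tau> j" using p_def i e unfolding Lw_def L_def Pos_def Q_def by auto
        have "data e \<noteq> data (\<tau> ! w)" using un1[OF pL wL] p_def i by auto
        moreover have "data e \<noteq> 0" using un0[OF pL] i p_def by simp
        moreover have "\<exists>q \<in> Lw \<tau> j. w < q \<and> data (\<tau> ! q) = data e"
        proof
          show "p \<in> Lw \<tau> j" by (rule pL)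
          show "w < p \<and> data (\<tau> ! p) = data e" using p_def i by simp
        qed
        ultimately show "y = 2" using e jk unfolding lam_def w_def by auto
      qed
      then show ?thesis by (metis length_map replicate_length_same)
    qed
    have C: "Q (\<tau> ! w)" "lam j (data (\<tau> ! w)) = 1" using wL un0[OF wL] jk unfolding Q_def Lw_def L_def lam_def w_def by auto
    have "write_data j \<tau>' = replicate (length (filter Q (take w \<tau>))) 0 @ [1] @ replicate (length (filter Q (drop (Suc w) \<tau>))) 2"
      unfolding write_data_def Q_def[symmetric] wd
      apply (subst split) using A B C by simp
    then have ex: "\<exists>a c. write_data j \<tau>' = replicate a 0 @ [1] @ replicate c 2" by blast
    show ?thesis using l' True ex unfolding Constrain_def by simp
  qed
  have chk: "\<tau>' \<in> Check n m k i" if i: "i \<in> {1..k}" for i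
  proof -
    have uv: "u i < v i" "v i < length \<tau>" "proc (\<tau> ! u i) = i" "proc (\<tau> ! v i) = i"
      using cM[OF i] unfolding M_def P_def Pos_def by auto
    have ul: "u i < length \<tau>" using uv by simp
    have pi: "oplus k (pr i) = i" "pr i \<in> {1..k}" using prk[OF i] by auto
    have "u i \<in> L \<tau> i" using cO[OF pi(2)] pi unfolding Omega_e_def by auto
    then have uloc: "loc (\<tau> ! u i) = i" unfolding L_def by auto
    have vloc: "loc (\<tau> ! v i) = oplus k i" using cO[OF i] unfolding Omega_e_def L_def by auto
    have ud: "data (\<tau>' ! u i) = 1"
      using nth[OF ul] uloc Wj[OF i] un0[OF Wj(1)[OF i]] i unfolding lam_def by auto
    define j where "j = oplus k i"
    have j: "j \<in> {1..k}" using opl[OF i] j_def by simp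
    have WjL: "Wj j \<in> Lw \<tau> j" using Wj[OF j] by simp
    have vd: "data (\<tau>' ! v i) = lam j (data (\<tau> ! v i))" using nth[OF uv(2)] vloc j_def by simp
    have "data (\<tau>' ! v i) = 0 \<or> (op (\<tau>' ! v i) = W \<and> data (\<tau>' ! v i) = 1)"
    proof -
      consider (a) "data (\<tau> ! v i) = 0" | (b) "v i = Wj j"
        | (c) a where "a \<in> Lw \<tau> j" "a < Wj j" "data (\<tau> ! a) = data (\<tau> ! v i)"
        using Wv[OF i] unfolding j_def[symmetric] by auto
      then show ?thesis
      proof cases
        case a then show ?thesis using vd unfolding lam_def by simp
      next
        case b
        then have "op (\<tau> ! v i) = W" using WjL unfolding Lw_def by auto
        then show ?thesis using vd b un0[OF WjL] j nth[OF uv(2)] unfolding lam_def by auto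
      next
        case c
        have "data (\<tau> ! v i) \<noteq> data (\<tau> ! Wj j)" using un1[OF c(1) WjL] c by auto
        moreover have "\<not> (\<exists>q \<in> Lw \<tau> j. Wj j < q \<and> data (\<tau> ! q) = data (\<tau> ! v i))"
          using un1[OF c(1)] c by fastforce
        ultimately show ?thesis using vd unfolding lam_def by auto
      qed
    qed
    then show ?thesis unfolding Check_def using l' uv ud uloc vloc nth[OF ul] nth[OF uv(2)] len
      by (intro CollectI conjI exI[of _ "u i"] exI[of _ "v i"]) auto
  qed
  show ?thesis using tr' con chk by blast
qed


theorem theorem8p1:
  fixes S :: "'i memsys" and n m k :: nat
  assumes "memory_system S" and "causality S" and "data_independence S"
    and "n \<ge> 1" and "m \<ge> 1" and "1 \<le> k" and "k \<le> min n m"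
  shows "(\<exists>\<tau>. \<tau> \<in> traces S n m \<and> unambiguous \<tau> \<and> has_canonical_nice_cycle k \<tau>)
     \<longleftrightarrow> (\<exists>\<tau>'. \<tau>' \<in> traces_v S n m 2 \<and>
            (\<forall>j \<in> {1..m}. \<tau>' \<in> Constrain n m k j) \<and>
            (\<forall>i \<in> {1..k}. \<tau>' \<in> Check n m k i))"
  using dir1[OF assms] dir2[OF assms] by blast

end
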